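(* Consider the excludable public good problem with $n$ players. Let $H:2^N\to\mathbb{R}_{\ge0}\cup\{\infty\}$ be normalized, monotone and symmetric, and let $\mathcal A$ be the VCG-based mechanism with function $H$. Suppose $\mathcal A$ always covers the incurred cost and is a $\rho$-approximation to the social cost for some $\rho<\frac{n^{(1-\delta)/2}}{4}$, where $0<\delta<1$ is a constant (assume $n^{1-\delta}$ and $n^{(1-\delta)/2}$ are integers). Then there is a valuation profile on which $\mathcal A$ serves a nonempty set (so the incurred cost is $1$), the sum of payments is at least $\frac{1-\delta}{2}\ln n-1$, and $\pi(ALG)\ge(\delta\ln n-1)\cdot\pi(OPT)$.
   Context: Excludable public good problem: players $N=\{1,\dots,n\}$, each player $i$ has a private value $v_i\ge0$ for being served; an outcome is a set $S\subseteq N$ of served players; the cost is $C(S)=1$ for $S\ne\emptyset$ and $C(\emptyset)=0$. $H$ is normalized if $H(\emptyset)=0$, monotone if $S\subseteq T\Rightarrow H(S)\le H(T)$, symmetric if $H(S)=H(T)$ whenever $|S|=|T|$. The VCG-based mechanism with $H$ outputs $ALG\in\arg\max_{S\subseteq N}\sum_{i\in S}v_i-H(S)$ (some tie-breaking), for each $i$ computes $ALG^{-i}\in\arg\max_{S\subseteq N\setminus\{i\}}\sum_{j\in S}v_j-H(S)$, and charges $p_i=\left[\sum_{j\in ALG^{-i}}v_j-H(ALG^{-i})\right]-\left[\sum_{j\in ALG\setminus\{i\}}v_j-H(ALG)\right]$. It always covers the cost if $\sum_ip_i\ge C(ALG)$ for every profile. Social cost: $\pi(S)=C(S)+\sum_{i\notin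 S}v_i$; $OPT$ minimizes $\pi$; a $\rho$-approximation means $\pi(ALG)\le\rho\,\pi(OPT)$ on every profile. $\ln$ is the natural logarithm. *)

theory Defs
  imports Complex_Main "HOL-Library.Extended_Real"
begin

text \<open>Players are N = {1..n}; valuations are functions nat => real (only values on N matter).
  H takes values in ereal (nonnegative reals or infinity).\<close>

definition players :: "nat \<Rightarrow> nat set" where
  "players n = {1..n}"

definition cost :: "nat set \<Rightarrow> real" where
  "cost S = (if S = {} then 0 else 1)"

definition valid_profile :: "nat \<Rightarrow> (nat \<Rightarrow> real) \<Rightarrow> bool" where
  "valid_profile n v \<longleftrightarrow> (\<forall>i\<in>players n. v i \<ge> 0)"

definition normalized :: "(nat set \<Rightarrow> ereal) \<Rightarrow> bool" where
  "normalized H \<longleftrightarrow> H {} = 0"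

definition monotone_on_players :: "nat \<Rightarrow> (nat set \<Rightarrow> ereal) \<Rightarrow> bool" where
  "monotone_on_players n H \<longleftrightarrow>
     (\<forall>S T. S \<subseteq> T \<and> T \<subseteq> players n \<longrightarrow> H S \<le> H T)"

definition symmetric_on_players :: "nat \<Rightarrow> (nat set \<Rightarrow> ereal) \<Rightarrow> bool" where
  "symmetric_on_players n H \<longleftrightarrow>
     (\<forall>S T. S \<subseteq> players n \<and> T \<subseteq> players n \<and> card S = card T \<longrightarrow> H S = H T)"

definition nonneg_on_players :: "nat \<Rightarrow> (nat set \<Rightarrow> ereal) \<Rightarrow> bool" where
  "nonneg_on_players n H \<longleftrightarrow> (\<forall>S. S \<subseteq> players n \<longrightarrow> H S \<ge> 0)"

definition vcg_obj :: "(nat set \<Rightarrow> ereal) \<Rightarrow> (nat \<Rightarrow> real) \<Rightarrow> nat set \<Rightarrow> ereal" where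
  "vcg_obj H v S = ereal (\<Sum>j\<in>S. v j) - H S"

definition is_argmax_on :: "(nat set \<Rightarrow> ereal) \<Rightarrow> (nat \<Rightarrow> real) \<Rightarrow> nat set \<Rightarrow> nat set \<Rightarrow> bool" where
  "is_argmax_on H v U S \<longleftrightarrow> S \<subseteq> U \<and> (\<forall>T. T \<subseteq> U \<longrightarrow> vcg_obj H v T \<le> vcg_obj H v S)"

text \<open>A VCG-based mechanism with function H, with a fixed (arbitrary) tie-breaking:
  ALG v is the chosen outcome, ALGm i v the chosen outcome without player i.\<close>
definition vcg_mechanism ::
  "nat \<Rightarrow> (nat set \<Rightarrow> ereal) \<Rightarrow> ((nat \<Rightarrow> real) \<Rightarrow> nat set)
     \<Rightarrow> (nat \<Rightarrow> (nat \<Rightarrow> real) \<Rightarrow> nat set) \<Rightarrow> bool" where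
  "vcg_mechanism n H ALG ALGm \<longleftrightarrow>
     (\<forall>v. valid_profile n v \<longrightarrow>
        is_argmax_on H v (players n) (ALG v) \<and>
        (\<forall>i\<in>players n. is_argmax_on H v (players n - {i}) (ALGm i v)))"

definition payment ::
  "(nat set \<Rightarrow> ereal) \<Rightarrow> ((nat \<Rightarrow> real) \<Rightarrow> nat set)
     \<Rightarrow> (nat \<Rightarrow> (nat \<Rightarrow> real) \<Rightarrow> nat set) \<Rightarrow> (nat \<Rightarrow> real) \<Rightarrow> nat \<Rightarrow> ereal" where
  "payment H ALG ALGm v i =
     vcg_obj H v (ALGm i v) - (ereal (\<Sum>j\<in>ALG v - {i}. v j) - H (ALG v))"

definition total_payment ::
  "nat \<Rightarrow> (nat set \<Rightarrow> ereal) \<Rightarrow> ((nat \<Rightarrow> real) \<Rightarrow> nat set)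
     \<Rightarrow> (nat \<Rightarrow> (nat \<Rightarrow> real) \<Rightarrow> nat set) \<Rightarrow> (nat \<Rightarrow> real) \<Rightarrow> ereal" where
  "total_payment n H ALG ALGm v = (\<Sum>i\<in>players n. payment H ALG ALGm v i)"

definition social_cost :: "nat \<Rightarrow> (nat \<Rightarrow> real) \<Rightarrow> nat set \<Rightarrow> real" where
  "social_cost n v S = cost S + (\<Sum>i\<in>players n - S. v i)"

definition opt_cost :: "nat \<Rightarrow> (nat \<Rightarrow> real) \<Rightarrow> real" where
  "opt_cost n v = Min (social_cost n v ` Pow (players n))"

end

theory Submission
  imports Defs
begin


definition D :: "nat \<Rightarrow> nat \<Rightarrow> real" where "D p t = (\<Sum>j\<in>{p<..t}. 1 / real j)"

lemma D_same[simp]: "D p p = 0" by (simp add: D_def)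

lemma D_Suc: "p \<le> m \<Longrightarrow> D p (Suc m) = D p m + 1 / real (Suc m)"
proof -
  assume "p \<le> m"
  then have "{p<..Suc m} = insert (Suc m) {p<..m}" by auto
  then show ?thesis by (simp add: D_def)
qed

lemma D_split: assumes "p \<le> t" "t \<le> N" shows "D p N = D p t + D t N"
proof -
  have "{p<..N} = {p<..t} \<union> {t<..N}" "{p<..t} \<inter> {t<..N} = {}" using assms by auto
  then show ?thesis unfolding D_def by (simp add: sum.union_disjoint)
qed

lemma D_nonneg: "0 \<le> D p t" unfolding D_def by (intro sum_nonneg) auto

lemma D_ln: assumes "p \<le> t" shows "ln (real t + 1) - ln (real p + 1) \<le> D p t"
  using assms
proof (induction t rule: dec_induct)
  case base then show ?case by simp
next
  case (step m)
  have e: "(real (Suc m) + 1) / (real m + 1) = 1 + 1 / (real m + 1)" by (simp add: field_simps)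
  have "ln (real (Suc m) + 1) - ln (real m + 1) = ln ((real (Suc m) + 1) / (real m + 1))"
    by (rule ln_divide_pos[symmetric]) auto
  also have "\<dots> = ln (1 + 1 / (real m + 1))" using e by simp
  also have "\<dots> \<le> 1 / (real m + 1)" by (rule ln_add_one_self_le_self) simp
  finally have l: "ln (real (Suc m) + 1) - ln (real m + 1) \<le> 1 / (real m + 1)" .
  have d: "D p (Suc m) = D p m + 1 / (real m + 1)" using D_Suc[OF step(1)] by (simp add: add.commute)
  show ?case using l d step.IH by linarith
qed

lemma D_le: assumes "p \<le> t" shows "D p t \<le> (real t - real p) / (real p + 1)"
proof -
  have "D p t \<le> (\<Sum>j\<in>{p<..t}. 1 / (real p + 1))" unfolding D_def
  proof (rule sum_mono)
    fix j assume "j \<in> {p<..t}"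
    then have "real p + 1 \<le> real j" by auto
    then have "0 < real j * (real p + 1)" by (intro mult_pos_pos) auto
    with \<open>real p + 1 \<le> real j\<close> show "1 / real j \<le> 1 / (real p + 1)" by (intro divide_left_mono) auto
  qed
  also have "\<dots> = (real t - real p) / (real p + 1)" using assms by (simp add: of_nat_diff)
  finally show ?thesis .
qed

lemma D_ge: assumes "p \<le> t" "0 < t" shows "(real t - real p) / real t \<le> D p t"
proof -
  have "(\<Sum>j\<in>{p<..t}. 1 / real t) \<le> D p t" unfolding D_def
  proof (rule sum_mono)
    fix j assume "j \<in> {p<..t}"
    then have "real j \<le> real t" "0 < real j" by auto
    then show "1 / real t \<le> 1 / real j" by (intro divide_left_mono) auto
  qed
  moreover have "(\<Sum>j\<in>{p<..t}. 1 / real t) = real (t - p) / real t" by simp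
  moreover have "real (t - p) = real t - real p" using assms(1) by (rule of_nat_diff)
  ultimately show ?thesis by simp
qed

lemma D_avg: assumes "p < t" "t \<le> N" shows "(real t - real p) * D p N \<le> (real N - real p) * D p t"
proof -
  have sp: "D p N = D p t + D t N" using assms by (intro D_split) auto
  have b1: "D t N \<le> (real N - real t) / real t"
  proof -
    have "D t N \<le> (real N - real t) / (real t + 1)" using D_le[of t N] assms by simp
    also have "\<dots> \<le> (real N - real t) / real t"
    proof (rule divide_left_mono)
      show "0 < (real t + 1) * real t" using assms by simp
    qed (use assms in auto)
    finally show ?thesis .
  qed
  have b2: "(real t - real p) / real t \<le> D p t" using D_ge assms by simp
  have nn: "0 \<le> real t - real p" "0 \<le> real N - real t" using assms by auto
  have c1: "(real t - real p) * D t N \<le> (real t - real p) * ((real N - real t) / real t)"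
    by (rule mult_left_mono[OF b1 nn(1)])
  have c2: "(real N - real t) * ((real t - real p) / real t) \<le> (real N - real t) * D p t"
    by (rule mult_left_mono[OF b2 nn(2)])
  have c3: "(real t - real p) * ((real N - real t) / real t) = (real N - real t) * ((real t - real p) / real t)"
    by simp
  have e1: "(real t - real p) * D p N = (real t - real p) * D p t + (real t - real p) * D t N"
    unfolding sp by (rule distrib_left)
  have "real N - real p = (real t - real p) + (real N - real t)" by simp
  then have e2: "(real N - real p) * D p t = (real t - real p) * D p t + (real N - real t) * D p t"
    by (simp only: distrib_right)
  show ?thesis using c1 c2 c3 e1 e2 by linarith
qed



lemma card_1_to[simp]: "card {1..(t::nat)} = t" by simp

locale vctx =
  fixes n :: nat and H :: "nat set \<Rightarrow> ereal"
    and ALG :: "(nat \<Rightarrow> real) \<Rightarrow> nat set"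
    and ALGm :: "nat \<Rightarrow> (nat \<Rightarrow> real) \<Rightarrow> nat set"
    and \<rho> :: real
  assumes n_pos: "0 < n"
    and H_nonneg: "nonneg_on_players n H"
    and H_norm: "normalized H"
    and H_mono: "monotone_on_players n H"
    and H_sym: "symmetric_on_players n H"
    and mech: "vcg_mechanism n H ALG ALGm"
    and covers: "\<forall>v. valid_profile n v \<longrightarrow> total_payment n H ALG ALGm v \<ge> ereal (cost (ALG v))"
    and approx: "\<forall>v. valid_profile n v \<longrightarrow> social_cost n v (ALG v) \<le> \<rho> * opt_cost n v"
begin

lemma fin_pl[simp]: "finite (players n)" by (simp add: players_def)

lemma ALG_sub: "valid_profile n v \<Longrightarrow> ALG v \<subseteq> players n"
  using mech by (auto simp: vcg_mechanism_def is_argmax_on_def)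

lemma ALGm_sub: "valid_profile n v \<Longrightarrow> i \<in> players n \<Longrightarrow> ALGm i v \<subseteq> players n - {i}"
  using mech by (auto simp: vcg_mechanism_def is_argmax_on_def)

lemma sc_nonneg: "valid_profile n v \<Longrightarrow> 0 \<le> social_cost n v S"
proof -
  assume a: "valid_profile n v"
  have "0 \<le> sum v (players n - S)" using a by (intro sum_nonneg) (auto simp: valid_profile_def)
  then show ?thesis by (simp add: social_cost_def cost_def)
qed

lemma opt_bounds: assumes "valid_profile n v"
  shows "0 \<le> opt_cost n v" "opt_cost n v \<le> 1"
proof -
  have fin: "finite (social_cost n v ` Pow (players n))" by simp
  have ne: "social_cost n v ` Pow (players n) \<noteq> {}" by auto
  have "opt_cost n v \<in> social_cost n v ` Pow (players n)"
    unfolding opt_cost_def using Min_in[OF fin ne] .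
  then show "0 \<le> opt_cost n v" using sc_nonneg[OF assms] by auto
  have "players n \<noteq> {}" using n_pos by (auto simp: players_def)
  then have "social_cost n v (players n) = 1" by (simp add: social_cost_def cost_def)
  moreover have "opt_cost n v \<le> social_cost n v (players n)"
    unfolding opt_cost_def using fin by (intro Min_le) auto
  ultimately show "opt_cost n v \<le> 1" by simp
qed

lemma sc_bound: assumes "valid_profile n v"
  shows "social_cost n v (ALG v) \<le> max \<rho> 0"
proof -
  have o: "0 \<le> opt_cost n v" "opt_cost n v \<le> 1" using opt_bounds[OF assms] by auto
  have "\<rho> * opt_cost n v \<le> max \<rho> 0"
  proof (cases "\<rho> \<ge> 0")
    case True then show ?thesis using o mult_left_mono[of "opt_cost n v" 1 \<rho>] by auto
  next
    case False then show ?thesis using o by (simp add: mult_nonpos_nonneg)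
  qed
  then show ?thesis using approx assms by (meson order_trans)
qed

lemma sc_missing: assumes "valid_profile n v" "i \<in> players n" "i \<notin> S"
  shows "v i \<le> social_cost n v S"
proof -
  have "v i \<le> (\<Sum>j\<in>players n - S. v j)"
    using assms by (intro member_le_sum) (auto simp: valid_profile_def)
  moreover have "0 \<le> cost S" by (simp add: cost_def)
  ultimately show ?thesis by (simp add: social_cost_def)
qed

lemma Hfin: "H (players n) \<noteq> \<infinity>"
proof -
  define L where "L = max \<rho> 0 + 1"
  define v where "v = (\<lambda>i::nat. L)"
  have val: "valid_profile n v" by (simp add: valid_profile_def v_def L_def)
  have "ALG v = players n"
  proof (rule ccontr)
    assume "ALG v \<noteq> players n"
    then obtain i where "i \<in> players n" "i \<notin> ALG v" using ALG_sub[OF val] by auto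
    then have "L \<le> social_cost n v (ALG v)" using sc_missing[OF val] by (simp add: v_def)
    then show False using sc_bound[OF val] by (simp add: L_def)
  qed
  moreover have "vcg_obj H v {} \<le> vcg_obj H v (ALG v)"
    using mech val by (auto simp: vcg_mechanism_def is_argmax_on_def)
  ultimately have "0 \<le> ereal (\<Sum>j\<in>players n. v j) - H (players n)"
    using H_norm by (simp add: vcg_obj_def normalized_def zero_ereal_def)
  then show ?thesis by (cases "H (players n)") auto
qed

definition hr :: "nat \<Rightarrow> real" where "hr t = real_of_ereal (H {1..t})"
definition objr :: "(nat \<Rightarrow> real) \<Rightarrow> nat set \<Rightarrow> real" where
  "objr v S = (\<Sum>j\<in>S. v j) - hr (card S)"

lemma card_pl[simp]: "card (players n) = n" by (simp add: players_def)

lemma H_real: assumes "S \<subseteq> players n" shows "H S = ereal (real_of_ereal (H S))" "0 \<le> H S"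
proof -
  have "0 \<le> H S" using H_nonneg assms by (auto simp: nonneg_on_players_def)
  moreover have "H S \<le> H (players n)" using H_mono assms by (auto simp: monotone_on_players_def)
  moreover have "H (players n) < \<infinity>" using Hfin by (simp add: less_top)
  ultimately have "H S \<noteq> \<infinity>" "H S \<noteq> -\<infinity>" by auto
  then have "\<bar>H S\<bar> \<noteq> \<infinity>" by auto
  then show "H S = ereal (real_of_ereal (H S))" by (rule ereal_real'[symmetric])
  show "0 \<le> H S" by fact
qed

lemma H_card: assumes "S \<subseteq> players n" shows "H S = ereal (hr (card S))"
proof -
  have c: "card S \<le> n" using card_mono[OF fin_pl assms] by simp
  then have sub: "{1..card S} \<subseteq> players n" by (auto simp: players_def)
  have "H S = H {1..card S}" using H_sym assms sub unfolding symmetric_on_players_def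
    by (metis card_1_to)
  moreover have e: "H {1..card S} = ereal (real_of_ereal (H {1..card S}))" by (rule H_real(1)[OF sub])
  ultimately show ?thesis unfolding hr_def by (rule trans)
qed

lemma hr_0[simp]: "hr 0 = 0" using H_norm by (simp add: hr_def normalized_def)

lemma hr_nonneg: "t \<le> n \<Longrightarrow> 0 \<le> hr t"
proof -
  assume "t \<le> n"
  then have sub: "{1..t} \<subseteq> players n" by (auto simp: players_def)
  then show ?thesis using H_real(2)[OF sub] H_card[OF sub] by simp
qed

lemma hr_mono: "s \<le> t \<Longrightarrow> t \<le> n \<Longrightarrow> hr s \<le> hr t"
proof -
  assume a: "s \<le> t" "t \<le> n"
  then have sub: "{1..t} \<subseteq> players n" "{1..s} \<subseteq> players n" by (auto simp: players_def)
  have "H {1..s} \<le> H {1..t}" using H_mono sub a by (auto simp: monotone_on_players_def)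
  then show ?thesis using H_card[OF sub(1)] H_card[OF sub(2)] by simp
qed

lemma obj_eq: "S \<subseteq> players n \<Longrightarrow> vcg_obj H v S = ereal (objr v S)"
  by (simp add: vcg_obj_def objr_def H_card)

lemma ALG_max: assumes "valid_profile n v" "T \<subseteq> players n"
  shows "objr v T \<le> objr v (ALG v)"
proof -
  have "vcg_obj H v T \<le> vcg_obj H v (ALG v)"
    using mech assms by (auto simp: vcg_mechanism_def is_argmax_on_def)
  then show ?thesis using obj_eq[OF assms(2)] obj_eq[OF ALG_sub[OF assms(1)]] by simp
qed

lemma ALGm_max: assumes "valid_profile n v" "i \<in> players n" "T \<subseteq> players n - {i}"
  shows "objr v T \<le> objr v (ALGm i v)"
proof -
  have "vcg_obj H v T \<le> vcg_obj H v (ALGm i v)"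
    using mech assms by (auto simp: vcg_mechanism_def is_argmax_on_def)
  moreover have "T \<subseteq> players n" "ALGm i v \<subseteq> players n" using assms ALGm_sub[OF assms(1,2)] by auto
  ultimately show ?thesis using obj_eq by simp
qed

definition rpay :: "(nat \<Rightarrow> real) \<Rightarrow> nat \<Rightarrow> real" where
  "rpay v i = objr v (ALGm i v) - objr v (ALG v) + (if i \<in> ALG v then v i else 0)"

lemma pay_eq: assumes "valid_profile n v" "i \<in> players n"
  shows "payment H ALG ALGm v i = ereal (rpay v i)"
proof -
  have s1: "ALG v \<subseteq> players n" "ALGm i v \<subseteq> players n" using ALG_sub[OF assms(1)] ALGm_sub[OF assms] by auto
  have fa: "finite (ALG v)" using finite_subset[OF s1(1) fin_pl] .
  have d: "sum v (ALG v - {i}) = sum v (ALG v) - (if i \<in> ALG v then v i else 0)"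
    using sum_diff1[OF fa, of v i] by simp
  have e1: "vcg_obj H v (ALGm i v) = ereal (objr v (ALGm i v))" by (rule obj_eq[OF s1(2)])
  have e2: "H (ALG v) = ereal (hr (card (ALG v)))" by (rule H_card[OF s1(1)])
  have "payment H ALG ALGm v i = ereal (objr v (ALGm i v)) - (ereal (sum v (ALG v - {i})) - ereal (hr (card (ALG v))))"
    unfolding payment_def e1 e2 ..
  also have "\<dots> = ereal (objr v (ALGm i v) - (sum v (ALG v - {i}) - hr (card (ALG v))))" by simp
  also have "\<dots> = ereal (rpay v i)" unfolding rpay_def d by (simp add: objr_def)
  finally show ?thesis .
qed

lemma tot_eq: assumes "valid_profile n v"
  shows "total_payment n H ALG ALGm v = ereal (\<Sum>i\<in>players n. rpay v i)"
proof -
  have "(\<Sum>i\<in>players n. payment H ALG ALGm v i) = (\<Sum>i\<in>players n. ereal (rpay v i))"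
    by (rule sum.cong) (auto simp: pay_eq[OF assms])
  then show ?thesis unfolding total_payment_def by simp
qed

lemma rpay_nonpos: assumes "valid_profile n v" "i \<in> players n" "i \<notin> ALG v \<or> v i = 0"
  shows "rpay v i \<le> 0"
proof -
  have "objr v (ALGm i v) \<le> objr v (ALG v)" using ALG_max[OF assms(1)] ALGm_sub[OF assms(1,2)] by blast
  then show ?thesis using assms by (auto simp: rpay_def)
qed


lemma sum_ifc: "finite S \<Longrightarrow> (\<Sum>i\<in>S. if i \<in> J then (L::real) else 0) = real (card (S \<inter> J)) * L"
  by (simp add: sum.If_cases Int_def)

lemma incr: assumes j: "1 \<le> j" "j \<le> n" shows "1 \<le> real j * (hr j - hr (j-1))"
proof -
  define L where "L = max \<rho> 0 + hr n + 1"
  define J where "J = {1..j}"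
  define v where "v = (\<lambda>i. if i \<in> J then L else 0)"
  have vi: "\<And>i. v i = (if i \<in> J then L else 0)" by (simp add: v_def)
  have hn: "0 \<le> hr n" using hr_nonneg by simp
  have Lpos: "0 \<le> L" using hn by (simp add: L_def)
  have val: "valid_profile n v" using Lpos by (simp add: valid_profile_def vi)
  have Jsub: "J \<subseteq> players n" using j by (auto simp: J_def players_def)
  have cJ: "card J = j" by (simp add: J_def)
  have AS: "ALG v \<subseteq> players n" by (rule ALG_sub[OF val])
  have finA: "finite (ALG v)" using finite_subset[OF AS fin_pl] .
  have JA: "J \<subseteq> ALG v"
  proof
    fix i assume i: "i \<in> J"
    show "i \<in> ALG v"
    proof (rule ccontr)
      assume "i \<notin> ALG v"
      then have "v i \<le> social_cost n v (ALG v)" using sc_missing[OF val] i Jsub by auto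
      then have "L \<le> max \<rho> 0" using sc_bound[OF val] i by (simp add: vi)
      then show False using hn by (simp add: L_def)
    qed
  qed
  have ne: "ALG v \<noteq> {}" using JA j by (auto simp: J_def)
  have "ereal (cost (ALG v)) \<le> total_payment n H ALG ALGm v" using covers val by blast
  then have "ereal 1 \<le> ereal (\<Sum>i\<in>players n. rpay v i)"
    using ne tot_eq[OF val] by (simp add: cost_def)
  then have tot: "1 \<le> (\<Sum>i\<in>players n. rpay v i)" by simp
  have sA: "(\<Sum>i\<in>ALG v. v i) = real j * L"
  proof -
    have "ALG v \<inter> J = J" using JA by auto
    moreover have "(\<Sum>i\<in>ALG v. v i) = (\<Sum>i\<in>ALG v. if i \<in> J then L else 0)" by (simp add: vi)
    ultimately show ?thesis using sum_ifc[OF finA, of J L] cJ by simp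
  qed
  have "objr v J \<le> objr v (ALG v)" by (rule ALG_max[OF val Jsub])
  moreover have "(\<Sum>i\<in>J. v i) = real j * L" using cJ by (simp add: vi)
  ultimately have hA: "hr (card (ALG v)) \<le> hr j" using sA cJ by (simp add: objr_def)
  have each: "rpay v i \<le> (if i \<in> J then hr j - hr (j-1) else 0)" if i: "i \<in> players n" for i
  proof (cases "i \<in> J")
    case False
    then have "rpay v i \<le> 0" using rpay_nonpos[OF val i] by (simp add: vi)
    then show ?thesis using False by simp
  next
    case True
    define S where "S = ALGm i v"
    have SS: "S \<subseteq> players n - {i}" using ALGm_sub[OF val i] by (simp add: S_def)
    have finS: "finite S" using finite_subset[of S "players n"] SS by auto
    define r where "r = card (S \<inter> J)"
    have "S \<inter> J \<subseteq> J - {i}" using SS by auto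
    then have "r \<le> card (J - {i})" unfolding r_def by (intro card_mono) (auto simp: J_def)
    then have rj: "r \<le> j - 1" using True cJ by (simp add: J_def)
    have "r \<le> card S" unfolding r_def using finS by (intro card_mono) auto
    moreover have "card S \<le> n" using card_mono[OF fin_pl, of S] SS by auto
    ultimately have hrS: "hr r \<le> hr (card S)" by (intro hr_mono)
    have hr0: "0 \<le> hr r" using rj j by (intro hr_nonneg) simp
    have hj1: "hr (j-1) \<le> hr n" using j by (intro hr_mono) auto
    have "(real (j-1) - real r) * L \<ge> hr (j-1) - hr r"
    proof (cases "r = j - 1")
      case True then show ?thesis by simp
    next
      case False
      then have "real (j-1) - real r \<ge> 1" using rj by linarith
      then have "(real (j-1) - real r) * L \<ge> 1 * L" using Lpos by (intro mult_right_mono) auto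
      then show ?thesis using hj1 hr0 hn by (simp add: L_def)
    qed
    then have oS: "objr v S \<le> real (j-1) * L - hr (j-1)"
      using hrS sum_ifc[OF finS, of J L] by (simp add: objr_def vi r_def algebra_simps)
    have "rpay v i = objr v S - (real j * L - hr (card (ALG v))) + L"
      using True JA sA by (simp add: rpay_def S_def objr_def vi subset_iff)
    also have "\<dots> \<le> hr j - hr (j-1)" using oS hA j by (simp add: algebra_simps of_nat_diff)
    finally show ?thesis using True by simp
  qed
  have "(\<Sum>i\<in>players n. rpay v i) \<le> (\<Sum>i\<in>players n. if i \<in> J then hr j - hr (j-1) else 0)"
    by (rule sum_mono) (rule each)
  also have "\<dots> = real j * (hr j - hr (j-1))"
  proof -
    have "J \<inter> players n = J" using Jsub by auto
    then show ?thesis using sum_ifc[of "players n" J "hr j - hr (j-1)"] cJ by (simp add: Int_commute)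
  qed
  finally show ?thesis using tot by simp
qed


lemma hr_D: assumes "p \<le> t" "t \<le> n" shows "D p t \<le> hr t - hr p"
  using assms
proof (induction t rule: dec_induct)
  case base then show ?case by simp
next
  case (step m)
  have "1 \<le> real (Suc m) * (hr (Suc m) - hr m)" using incr[of "Suc m"] step by simp
  then have "1 / real (Suc m) \<le> hr (Suc m) - hr m"
    by (simp add: divide_le_eq mult.commute del: of_nat_Suc)
  then show ?case using step D_Suc[OF step(1)] by simp
qed


lemma construct: assumes a: "1 \<le> a" "a \<le> n"
  shows "\<exists>v. valid_profile n v \<and> ALG v = {1..a} \<and> hr a - 1 \<le> (\<Sum>i\<in>players n. rpay v i)
           \<and> social_cost n v (ALG v) = 1 + D a n * real n / (real n + 1)"
proof -
  define sl where "sl t = (hr a - hr t) / (real a - real t)" for t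
  have fin: "finite (sl ` {..<a})" by simp
  have z: "0 \<in> {..<a}" using a by simp
  then have ne: "sl ` {..<a} \<noteq> {}" by blast
  define s where "s = Max (sl ` {..<a})"
  obtain t0 where t0: "t0 < a" "sl t0 = s" using Max_in[OF fin ne] unfolding s_def by auto
  have sl_le: "sl t \<le> s" if "t < a" for t unfolding s_def using fin that by (intro Max_ge) auto
  have supp: "real t * s - hr t \<le> real a * s - hr a" if t: "t < a" for t
  proof -
    have pos: "0 < real a - real t" using t by simp
    have "(hr a - hr t) / (real a - real t) \<le> s" using sl_le[OF t] by (simp add: sl_def)
    then have "hr a - hr t \<le> s * (real a - real t)" using pos by (simp add: pos_divide_le_eq)
    then show ?thesis by (simp add: algebra_simps)
  qed
  have eq0: "real t0 * s - hr t0 = real a * s - hr a"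
  proof -
    have pos: "real a - real t0 \<noteq> 0" using t0 by simp
    have "(hr a - hr t0) / (real a - real t0) = s" using t0 by (simp add: sl_def)
    then have "hr a - hr t0 = s * (real a - real t0)" using pos by (simp add: divide_eq_eq)
    then show ?thesis by (simp add: algebra_simps)
  qed
  have hr1: "1 \<le> hr 1" using incr[of 1] a by simp
  have hra1: "1 \<le> hr a" using hr1 hr_mono[of 1 a] a by simp
  have apos: "0 < real a" using a by simp
  have s_ge: "hr a / real a \<le> s" using sl_le[of 0] a by (simp add: sl_def)
  then have as_ge: "hr a \<le> real a * s" using apos by (simp add: divide_le_eq mult.commute)
  have s_ge2: "1 / real a \<le> s"
    using s_ge divide_right_mono[OF hra1, of "real a"] apos by linarith
  define \<epsilon> where "\<epsilon> = 1 / (real a * real a)"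
  have epos: "0 < \<epsilon>" using apos by (simp add: \<epsilon>_def)
  define y where "y = s + \<epsilon>"
  define x where "x = (D a n / (real n - real a)) * (real n / (real n + 1))"
  have "0 < 1 / real a" using apos by simp
  then have ypos: "0 < y" using s_ge2 epos unfolding y_def by linarith
  have Dn: "0 \<le> D a n" by (rule D_nonneg)
  have x0: "0 \<le> x" using Dn a unfolding x_def by (intro mult_nonneg_nonneg divide_nonneg_nonneg) auto
  have xy: "x < y"
  proof (cases "a = n")
    case True then show ?thesis using ypos by (simp add: x_def)
  next
    case False
    then have nap: "0 < real n - real a" using a by simp
    have "D a n \<le> (real n - real a) / (real a + 1)" using D_le a by simp
    then have q1: "D a n / (real n - real a) \<le> 1 / (real a + 1)" using nap by (simp add: divide_le_eq)
    have q2: "real n / (real n + 1) \<le> 1" by simp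
    have "x \<le> 1 / (real a + 1) * 1" unfolding x_def
      using q1 q2 Dn nap by (intro mult_mono) auto
    also have "\<dots> < 1 / real a" using apos by (simp add: frac_less2)
    finally show ?thesis using s_ge2 epos by (simp add: y_def)
  qed
  have xgap: "(real t - real a) * x < hr t - hr a" if t: "a < t" "t \<le> n" for t
  proof -
    have nap: "0 < real n - real a" using t by simp
    have av: "(real t - real a) * D a n \<le> (real n - real a) * D a t" using D_avg t by simp
    then have r1: "(real t - real a) * (D a n / (real n - real a)) \<le> D a t"
      using nap by (simp add: field_simps)
    have Dt: "0 < D a t"
    proof -
      have "(real t - real a) / real t \<le> D a t" using D_ge[of a t] t by simp
      moreover have "0 < (real t - real a) / real t" using t by simp
      ultimately show ?thesis by linarith
    qed
    have "(real t - real a) * x = ((real t - real a) * (D a n / (real n - real a))) * (real n / (real n + 1))"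
      by (simp add: x_def)
    also have "\<dots> \<le> D a t * (real n / (real n + 1))"
      using r1 by (intro mult_right_mono) auto
    also have "\<dots> < D a t" using Dt by (simp add: field_simps)
    also have "\<dots> \<le> hr t - hr a" using hr_D t by simp
    finally show ?thesis .
  qed
  define A where "A = {1..a}"
  define v where "v = (\<lambda>i::nat. if i \<le> a then y else x)"
  have vi: "\<And>i. v i = (if i \<le> a then y else x)" by (simp add: v_def)
  have val: "valid_profile n v" using x0 ypos by (simp add: valid_profile_def vi)
  have Asub: "A \<subseteq> players n" using a by (auto simp: A_def players_def)
  have cA: "card A = a" by (simp add: A_def)
  have sumS: "(\<Sum>i\<in>S. v i) = real (card (S \<inter> A)) * y + real (card (S - A)) * x"
    if S: "S \<subseteq> players n" for S
  proof -
    have fS: "finite S" using finite_subset[OF S fin_pl] .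
    have "(\<Sum>i\<in>S. v i) = (\<Sum>i\<in>S \<inter> A. v i) + (\<Sum>i\<in>S - A. v i)" by (rule sum.Int_Diff[OF fS])
    moreover have "(\<Sum>i\<in>S \<inter> A. v i) = (\<Sum>i\<in>S \<inter> A. y)" by (rule sum.cong) (auto simp: vi A_def)
    moreover have "(\<Sum>i\<in>S - A. v i) = (\<Sum>i\<in>S - A. x)"
      by (rule sum.cong) (use S in \<open>auto simp: vi A_def players_def subset_iff\<close>)
    ultimately show ?thesis by simp
  qed
  have key: "real t * y - hr t \<le> real a * y - hr a" if "t \<le> a" for t
  proof (cases "t = a")
    case False
    then have ta: "t < a" using that by simp
    have "real t * \<epsilon> \<le> real a * \<epsilon>" using ta epos by (intro mult_right_mono) auto
    then show ?thesis using supp[OF ta] by (simp add: y_def algebra_simps)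
  qed simp
  have keys: "real t * y - hr t < real a * y - hr a" if ta: "t < a" for t
  proof -
    have "real t * \<epsilon> < real a * \<epsilon>" using ta epos by (intro mult_strict_right_mono) auto
    then show ?thesis using supp[OF ta] by (simp add: y_def algebra_simps)
  qed
  have objA: "objr v A = real a * y - hr a" using sumS[OF Asub] cA by (simp add: objr_def)
  have strict: "objr v S < objr v A" if S: "S \<subseteq> players n" "S \<noteq> A" for S
  proof -
    have fS: "finite S" using finite_subset[OF S(1) fin_pl] .
    define c where "c = card (S \<inter> A)"
    define b where "b = card (S - A)"
    have cS: "card S = c + b" unfolding c_def b_def by (rule card_Int_Diff[OF fS])
    have "card (S \<inter> A) \<le> card A" by (rule card_mono) (auto simp: A_def)
    then have ca: "c \<le> a" unfolding c_def using cA by simp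
    have cbn: "c + b \<le> n" using card_mono[OF fin_pl S(1)] cS by simp
    have oS: "objr v S = real c * y + real b * x - hr (c + b)"
      using sumS[OF S(1)] cS by (simp add: objr_def c_def b_def)
    show ?thesis
    proof (cases "b = 0")
      case True
      then have "S - A = {}" using fS unfolding b_def by simp
      then have "S \<subset> A" using S by auto
      then have "card S < card A" by (intro psubset_card_mono) (auto simp: A_def)
      then have "card S < a" using cA by simp
      then have "c < a" using cS True by simp
      then show ?thesis using keys[of c] oS objA True by simp
    next
      case False
      then have bpos: "0 < real b" by simp
      show ?thesis
      proof (cases "c + b \<le> a")
        case True
        have "real b * x < real b * y" using bpos xy by simp
        then have "objr v S < real (c + b) * y - hr (c + b)" using oS by (simp add: algebra_simps)
        also have "\<dots> \<le> real a * y - hr a" using key[OF True] .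
        finally show ?thesis using objA by simp
      next
        case False
        then have gt: "a < c + b" by simp
        have "(real a - real c) * x \<le> (real a - real c) * y" using ca xy by (intro mult_left_mono) auto
        then have "objr v S \<le> real a * y + (real (c + b) - real a) * x - hr (c + b)"
          using oS by (simp add: algebra_simps)
        also have "\<dots> < real a * y - hr a" using xgap[OF gt cbn] by simp
        finally show ?thesis using objA by simp
      qed
    qed
  qed
  have AL: "ALG v = A"
  proof (rule ccontr)
    assume ne: "ALG v \<noteq> A"
    have "objr v A \<le> objr v (ALG v)" by (rule ALG_max[OF val Asub])
    moreover have "objr v (ALG v) < objr v A" using strict[OF ALG_sub[OF val] ne] .
    ultimately show False by simp
  qed
  have pay: "rpay v i \<ge> (if i \<in> A then y - real a * \<epsilon> else 0)" if i: "i \<in> players n" for i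
  proof (cases "i \<in> A")
    case True
    have "t0 \<le> card (A - {i})" using True cA t0 by simp
    then obtain T where T: "T \<subseteq> A - {i}" "card T = t0" "finite T" by (rule obtain_subset_with_card_n)
    have Tp: "T \<subseteq> players n - {i}" using T Asub by auto
    have TA: "T \<inter> A = T" "T - A = {}" using T by auto
    have Tpl: "T \<subseteq> players n" using Tp by auto
    have "(\<Sum>i\<in>T. v i) = real t0 * y" using sumS[OF Tpl] TA T(2) by simp
    then have oT: "objr v T = real t0 * y - hr t0" using T(2) by (simp add: objr_def)
    have "objr v T \<le> objr v (ALGm i v)" by (rule ALGm_max[OF val i Tp])
    then have "rpay v i \<ge> real t0 * y - hr t0 - (real a * y - hr a) + y"
      using True AL objA oT by (simp add: rpay_def vi A_def)
    moreover have "real t0 * y - hr t0 = real a * s - hr a + real t0 * \<epsilon>" using eq0 by (simp add: y_def algebra_simps)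
    moreover have "0 \<le> real t0 * \<epsilon>" using epos by simp
    ultimately show ?thesis using True by (simp add: y_def algebra_simps)
  next
    case False
    have Ap: "A \<subseteq> players n - {i}" using False Asub by auto
    have "objr v A \<le> objr v (ALGm i v)" by (rule ALGm_max[OF val i Ap])
    then show ?thesis using False AL by (simp add: rpay_def)
  qed
  have "(\<Sum>i\<in>players n. if i \<in> A then y - real a * \<epsilon> else 0) \<le> (\<Sum>i\<in>players n. rpay v i)"
    by (rule sum_mono) (rule pay)
  moreover have "(\<Sum>i\<in>players n. if i \<in> A then y - real a * \<epsilon> else 0) = real a * (y - real a * \<epsilon>)"
  proof -
    have "players n \<inter> A = A" using Asub by auto
    then show ?thesis using sum_ifc[of "players n" A "y - real a * \<epsilon>"] cA by simp
  qed
  moreover have "real a * (y - real a * \<epsilon>) = real a * s + real a * \<epsilon> - 1"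
    using apos by (simp add: y_def \<epsilon>_def field_simps)
  moreover have "0 \<le> real a * \<epsilon>" using epos apos by simp
  ultimately have P: "hr a - 1 \<le> (\<Sum>i\<in>players n. rpay v i)" using as_ge by linarith
  have Ane: "A \<noteq> {}" using a by (simp add: A_def)
  have "(\<Sum>i\<in>players n - A. v i) = real (card (players n - A)) * x"
  proof -
    have "(\<Sum>i\<in>players n - A. v i) = (\<Sum>i\<in>players n - A. x)"
      by (rule sum.cong) (auto simp: vi A_def players_def)
    then show ?thesis by simp
  qed
  moreover have "card (players n - A) = n - a"
  proof -
    have "finite A" by (simp add: A_def)
    then have "card (players n - A) = card (players n) - card A" using Asub by (rule card_Diff_subset)
    then show ?thesis using cA by simp
  qed
  moreover have "real (n - a) * x = D a n * real n / (real n + 1)"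
  proof (cases "a = n")
    case True then show ?thesis by simp
  next
    case False
    then have nz: "real n - real a \<noteq> 0" using a by simp
    have r: "real (n - a) = real n - real a" using a by (simp add: of_nat_diff)
    have "real (n - a) * x = ((real n - real a) * (D a n / (real n - real a))) * (real n / (real n + 1))"
      unfolding x_def r by (simp only: mult.assoc)
    also have "(real n - real a) * (D a n / (real n - real a)) = D a n" using nz by simp
    finally show ?thesis by simp
  qed
  ultimately have SC: "social_cost n v (ALG v) = 1 + D a n * real n / (real n + 1)"
    using AL Ane by (simp add: social_cost_def cost_def)
  show ?thesis using val AL P SC A_def by blast
qed


end

theorem theorem5p1:
  fixes n :: nat and H :: "nat set \<Rightarrow> ereal"
    and ALG :: "(nat \<Rightarrow> real) \<Rightarrow> nat set"
    and ALGm :: "nat \<Rightarrow> (nat \<Rightarrow> real) \<Rightarrow> nat set"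
    and \<rho> \<delta> :: real
  assumes n_pos: "0 < n"
    and H_nonneg: "nonneg_on_players n H"
    and H_norm: "normalized H"
    and H_mono: "monotone_on_players n H"
    and H_sym: "symmetric_on_players n H"
    and mech: "vcg_mechanism n H ALG ALGm"
    and covers: "\<forall>v. valid_profile n v \<longrightarrow> total_payment n H ALG ALGm v \<ge> ereal (cost (ALG v))"
    and approx: "\<forall>v. valid_profile n v \<longrightarrow> social_cost n v (ALG v) \<le> \<rho> * opt_cost n v"
    and rho_bound: "\<rho> < real n powr ((1 - \<delta>) / 2) / 4"
    and delta: "0 < \<delta>" "\<delta> < 1"
    and int1: "\<exists>k::nat. real n powr (1 - \<delta>) = real k"
    and int2: "\<exists>k::nat. real n powr ((1 - \<delta>) / 2) = real k"
  shows "\<exists>v. valid_profile n v \<and> ALG v \<noteq> {} \<and>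
           total_payment n H ALG ALGm v \<ge> ereal ((1 - \<delta>) / 2 * ln (real n) - 1) \<and>
           social_cost n v (ALG v) \<ge> (\<delta> * ln (real n) - 1) * opt_cost n v"
proof -
  interpret V: vctx n H ALG ALGm \<rho>
    using n_pos H_nonneg H_norm H_mono H_sym mech covers approx by unfold_locales
  obtain k :: nat where k: "real n powr ((1 - \<delta>) / 2) = real k" using int2 by blast
  have n1: "1 \<le> real n" using n_pos by simp
  have "1 \<le> real n powr ((1 - \<delta>) / 2)" using n1 delta by (intro ge_one_powr_ge_zero) auto
  then have k1: "1 \<le> k" using k by simp
  have "real n powr ((1 - \<delta>) / 2) \<le> real n powr 1" using n1 delta by (intro powr_mono) auto
  then have kn: "k \<le> n" using k n_pos by simp
  have lnk: "ln (real k) = (1 - \<delta>) / 2 * ln (real n)"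
    using arg_cong[OF k, of ln] by simp
  have lnk0: "0 \<le> ln (real k)" using k1 by simp
  obtain v where v: "valid_profile n v" "ALG v = {1..k}"
      "V.hr k - 1 \<le> (\<Sum>i\<in>players n. V.rpay v i)"
      "social_cost n v (ALG v) = 1 + D k n * real n / (real n + 1)"
    using V.construct[OF k1 kn] by blast
  have "D 0 k \<le> V.hr k - V.hr 0" using V.hr_D[of 0 k] kn by simp
  moreover have "ln (real k + 1) - ln (real 0 + 1) \<le> D 0 k" by (rule D_ln) simp
  moreover have "ln (real k) \<le> ln (real k + 1)" using k1 by simp
  ultimately have hk: "ln (real k) \<le> V.hr k" by simp
  have P: "ereal ((1 - \<delta>) / 2 * ln (real n) - 1) \<le> total_payment n H ALG ALGm v"
    using V.tot_eq[OF v(1)] v(3) hk lnk by simp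
  have ne: "ALG v \<noteq> {}" using v(2) k1 by simp
  define Dk where "Dk = D k n"
  have D0: "0 \<le> Dk" unfolding Dk_def by (rule D_nonneg)
  have Dup: "Dk \<le> real n + 1"
  proof -
    have "Dk \<le> (real n - real k) / (real k + 1)" unfolding Dk_def using D_le kn by simp
    also have "\<dots> \<le> real n - real k"
    proof -
      have "(real n - real k) * 1 \<le> (real n - real k) * (real k + 1)" using kn by (intro mult_left_mono) auto
      then show ?thesis by (simp add: divide_le_eq)
    qed
    finally show ?thesis by simp
  qed
  have "Dk * real n / (real n + 1) = Dk - Dk / (real n + 1)" by (simp add: field_simps)
  moreover have "Dk / (real n + 1) \<le> 1" using Dup by simp
  ultimately have SC1: "Dk - 1 \<le> Dk * real n / (real n + 1)" by linarith
  have Dl: "ln (real n + 1) - ln (real k + 1) \<le> Dk" unfolding Dk_def using D_ln kn by simp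
  have "ln (real n) \<le> ln (real n + 1)" using n_pos by simp
  moreover have "ln (real k + 1) \<le> ln 2 + ln (real k)"
  proof -
    have "ln (real k + 1) \<le> ln (2 * real k)" using k1 by simp
    also have "\<dots> = ln 2 + ln (real k)" using k1 by (simp add: ln_mult)
    finally show ?thesis .
  qed
  moreover have "ln (2::real) \<le> 1" using ln_le_minus_one[of 2] by simp
  moreover have lnk2: "2 * ln (real k) = ln (real n) - \<delta> * ln (real n)" using lnk by (simp add: algebra_simps)
  moreover have "social_cost n v (ALG v) = 1 + Dk * real n / (real n + 1)" using v(4) by (simp add: Dk_def)
  ultimately have geq: "\<delta> * ln (real n) - 1 \<le> social_cost n v (ALG v)"
    using SC1 Dl lnk0 by linarith
  have gez: "0 \<le> social_cost n v (ALG v)" by (rule V.sc_nonneg[OF v(1)])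
  have ob: "0 \<le> opt_cost n v" "opt_cost n v \<le> 1" using V.opt_bounds[OF v(1)] by auto
  have "(\<delta> * ln (real n) - 1) * opt_cost n v \<le> social_cost n v (ALG v)"
  proof (cases "0 \<le> \<delta> * ln (real n) - 1")
    case True
    then have "(\<delta> * ln (real n) - 1) * opt_cost n v \<le> (\<delta> * ln (real n) - 1) * 1"
      using ob by (intro mult_left_mono) auto
    then show ?thesis using geq by simp
  next
    case False
    then have "(\<delta> * ln (real n) - 1) * opt_cost n v \<le> 0" using ob by (simp add: mult_nonpos_nonneg)
    then show ?thesis using gez by simp
  qed
  then show ?thesis using v(1) ne P by blast
qed

end
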